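(* For any valid scheme (satisfying (C1)–(C8)) with $N\ge1$, $K\ge2$, the normalized download cost satisfies \[ d\ \ge\ 1+\frac1N+\frac1{N^2}+\dots+\frac1{N^{K-1}}. \]
   Context: Model (SPIR with user-side common randomness). There are $N\ge1$ non-colluding databases, each storing the same $K\ge2$ messages $W_1,\dots,W_K$. Each message consists of $L$ i.i.d. symbols uniform over a sufficiently large finite field $\mathbb{F}_q$; entropies are in $q$-ary units, so $H(W_k)=L$ and $H(W_{1:K})=KL$. The databases share server-side common randomness $\mathcal{R}_S$, unknown to the user. The user holds user-side common randomness $\mathcal{R}_U$, a subset of the components of $\mathcal{R}_S$, unknown to the databases except for its size (uniform over subsets of given cardinality). $\mathcal{F}$ is the user's retrieval-strategy randomness. To retrieve $W_k$ the user sends $Q_n^{[k,\mathcal{R}_U]}$ to database $n$, receiving $A_n^{[k,\mathcal{R}_U]}$; $W_{\bar k}=\{W_j:j\ne k\}$. A valid scheme satisfies for all $k,n,\mathcal{R}_U$: (C1) $I(W_{1:K};k,\mathcal{F},\mathcal{R}_S,\mathcal{R}_U)=0$; (C2) $I(Q_{1:N}^{[k,\mathcal{R}_U]};W_{1:K},\mathcal{R}_S\setminus\mathcal{R}_U)=0$; (C3) $H(Q_{1:N}^{[k,\mathcal{R}_U]}\mid\mathcal{F})=0$; (C4) $H(A_n^{[k,\mathcal{R}_U]}\mid Q_n^{[k,\mathcal{R}_U]},W_{1:K},\mathcal{R}_S)=0$; (C5) $H(W_k\mid\mathcal{F},A_{1:N}^{[k,\mathcal{R}_U]},\mathcal{R}_U)=0$;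 (C6) user privacy: for all $k,k',n,\mathcal{R}_U$ there is $\mathcal{R}_U'$ with $H(\mathcal{R}_U')=H(\mathcal{R}_U)$ and $(Q_n^{[k,\mathcal{R}_U]},A_n^{[k,\mathcal{R}_U]},W_{1:K},\mathcal{R}_S)\sim(Q_n^{[k',\mathcal{R}_U']},A_n^{[k',\mathcal{R}_U']},W_{1:K},\mathcal{R}_S)$; (C7) $I(W_{\bar k};\mathcal{F},A_{1:N}^{[k,\mathcal{R}_U]},\mathcal{R}_U)=0$; (C8) $I(\mathcal{R}_S\setminus\mathcal{R}_U;\mathcal{F},A_{1:N}^{[k,\mathcal{R}_U]},W_k,\mathcal{R}_U)=0$. $D$ is the maximal total number of downloaded symbols; $d=D/L$. *)

theory Defs
  imports "HOL-Probability.Probability_Mass_Function"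
begin

definition ent :: "real \<Rightarrow> 'w pmf \<Rightarrow> ('w \<Rightarrow> 'a) \<Rightarrow> real" where
  "ent b P X = - (\<Sum>x\<in>set_pmf (map_pmf X P).
                     pmf (map_pmf X P) x * log b (pmf (map_pmf X P) x))"

definition cond_ent :: "real \<Rightarrow> 'w pmf \<Rightarrow> ('w \<Rightarrow> 'a) \<Rightarrow> ('w \<Rightarrow> 'b) \<Rightarrow> real" where
  "cond_ent b P X Y = ent b P (\<lambda>w. (X w, Y w)) - ent b P Y"

definition mut_inf :: "real \<Rightarrow> 'w pmf \<Rightarrow> ('w \<Rightarrow> 'a) \<Rightarrow> ('w \<Rightarrow> 'b) \<Rightarrow> real" where
  "mut_inf b P X Y = ent b P X + ent b P Y - ent b P (\<lambda>w. (X w, Y w))"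

end

theory Submission
  imports Defs "HOL-Probability.Information"
begin

lemma pmf_map_sum: "pmf (map_pmf X P) x = (\<Sum>v\<in>{v. X v = x}. pmf P v)" for P :: "'w::finite pmf"
  by (simp add: pmf_map measure_measure_pmf_finite vimage_def)

lemma ent_exp:
  fixes P :: "'w::finite pmf"
  shows "ent b P X = (\<Sum>w\<in>UNIV. pmf P w * - log b (pmf (map_pmf X P) (X w)))"
proof -
  have "(\<Sum>w\<in>UNIV. pmf P w * - log b (pmf (map_pmf X P) (X w)))
      = (\<Sum>x\<in>X`UNIV. \<Sum>w\<in>{w\<in>UNIV. X w = x}. pmf P w * - log b (pmf (map_pmf X P) (X w)))"
    by (rule sum.image_gen) simp
  also have "\<dots> = (\<Sum>x\<in>X`UNIV. pmf (map_pmf X P) x * - log b (pmf (map_pmf X P) x))"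
    by (intro sum.cong refl) (simp add: pmf_map_sum sum_distrib_right sum_negf)
  also have "\<dots> = (\<Sum>x\<in>set_pmf (map_pmf X P). pmf (map_pmf X P) x * - log b (pmf (map_pmf X P) x))"
    by (rule sum.mono_neutral_right) (auto simp: pmf_eq_0_set_pmf)
  finally show ?thesis unfolding ent_def by (simp add: sum_negf)
qed

lemma pm_pos: "w \<in> set_pmf P \<Longrightarrow> 0 < pmf (map_pmf X P) (X w)"
  by (simp add: pmf_positive)

lemma ent_fun_le:
  fixes P :: "'w::finite pmf"
  assumes b: "1 < b"
  shows "ent b P (\<lambda>w. h (Y w)) \<le> ent b P Y"
  unfolding ent_exp
proof (rule sum_mono)
  fix w
  show "pmf P w * - log b (pmf (map_pmf (\<lambda>w. h (Y w)) P) (h (Y w)))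
        \<le> pmf P w * - log b (pmf (map_pmf Y P) (Y w))"
  proof (cases "w \<in> set_pmf P")
    case True
    have "pmf (map_pmf Y P) (Y w) \<le> pmf (map_pmf (\<lambda>w. h (Y w)) P) (h (Y w))"
      unfolding pmf_map_sum by (rule sum_mono2) auto
    moreover have "0 < pmf (map_pmf Y P) (Y w)" using True by (rule pm_pos)
    ultimately have "log b (pmf (map_pmf Y P) (Y w)) \<le> log b (pmf (map_pmf (\<lambda>w. h (Y w)) P) (h (Y w)))"
      using b by simp
    then show ?thesis by (intro mult_left_mono) auto
  qed (simp add: set_pmf_iff)
qed

lemma ent_cong_supp:
  assumes "\<And>w. w \<in> set_pmf P \<Longrightarrow> X w = Y w"
  shows "ent b P X = ent b P Y"
proof -
  have "map_pmf X P = map_pmf Y P" by (rule map_pmf_cong) (use assms in auto)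
  then show ?thesis unfolding ent_def by simp
qed

definition fdep :: "'w pmf \<Rightarrow> ('w \<Rightarrow> 'a) \<Rightarrow> ('w \<Rightarrow> 'b) \<Rightarrow> bool" where
  "fdep P Y X \<longleftrightarrow> (\<exists>g. \<forall>w\<in>set_pmf P. X w = g (Y w))"

lemma fdepI: "(\<And>w. w \<in> set_pmf P \<Longrightarrow> X w = g (Y w)) \<Longrightarrow> fdep P Y X"
  unfolding fdep_def by blast

lemma ent_fdep_le:
  fixes P :: "'w::finite pmf"
  assumes b: "1 < b" and "fdep P Y X"
  shows "ent b P X \<le> ent b P Y"
proof -
  obtain g where g: "\<forall>w\<in>set_pmf P. X w = g (Y w)" using assms(2) unfolding fdep_def by blast
  have "ent b P X = ent b P (\<lambda>w. g (Y w))" by (rule ent_cong_supp) (use g in auto)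
  also have "\<dots> \<le> ent b P Y" by (rule ent_fun_le[OF b])
  finally show ?thesis .
qed

lemma ent_fdep_eq:
  fixes P :: "'w::finite pmf"
  assumes b: "1 < b" and "fdep P Y X" "fdep P X Y"
  shows "ent b P X = ent b P Y"
  using ent_fdep_le[OF b assms(2)] ent_fdep_le[OF b assms(3)] by simp

lemma ent_nonneg:
  fixes P :: "'w::finite pmf"
  assumes b: "1 < b"
  shows "0 \<le> ent b P X"
  unfolding ent_exp
proof (rule sum_nonneg)
  fix w
  show "0 \<le> pmf P w * - log b (pmf (map_pmf X P) (X w))"
  proof (cases "w \<in> set_pmf P")
    case True
    have "pmf (map_pmf X P) (X w) \<le> 1" by (rule pmf_le_1)
    then have "log b (pmf (map_pmf X P) (X w)) \<le> 0" using b pm_pos[OF True, of X] by simp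
    then show ?thesis using pmf_nonneg[of P w] by (simp add: mult_nonneg_nonpos)
  qed (simp add: set_pmf_iff)
qed

lemma cond_ent_nonneg:
  fixes P :: "'w::finite pmf"
  assumes b: "1 < b"
  shows "0 \<le> cond_ent b P X Y"
  unfolding cond_ent_def using ent_fun_le[OF b, of P snd "\<lambda>w. (X w, Y w)"] by simp

lemma cond_ent_zero_fdep:
  fixes P :: "'w::finite pmf"
  assumes b: "1 < b" and z: "cond_ent b P X Y = 0"
  shows "fdep P Y X"
proof -
  let ?pxy = "\<lambda>w. pmf (map_pmf (\<lambda>w. (X w, Y w)) P) (X w, Y w)"
  let ?py = "\<lambda>w. pmf (map_pmf Y P) (Y w)"
  let ?t = "\<lambda>w. pmf P w * (log b (?py w) - log b (?pxy w))"
  have le: "?pxy w \<le> ?py w" for w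
    unfolding pmf_map_sum by (rule sum_mono2) auto
  have tnn: "0 \<le> ?t w" for w
  proof (cases "w \<in> set_pmf P")
    case True
    have "0 < ?pxy w" using pm_pos[OF True, of "\<lambda>w. (X w, Y w)"] by simp
    then have "log b (?pxy w) \<le> log b (?py w)" using le[of w] b by simp
    then show ?thesis by simp
  qed (simp add: set_pmf_iff)
  have "(\<Sum>w\<in>UNIV. ?t w) = cond_ent b P X Y"
    unfolding cond_ent_def ent_exp[of b P "\<lambda>w. (X w, Y w)"] ent_exp[of b P Y]
    by (simp add: sum_subtractf[symmetric] algebra_simps)
  with z have "(\<Sum>w\<in>UNIV. ?t w) = 0" by simp
  then have t0: "\<And>w. ?t w = 0" using tnn by (simp add: sum_nonneg_eq_0_iff)
  have eqp: "?pxy w = ?py w" if w: "w \<in> set_pmf P" for w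
  proof -
    have "pmf P w > 0" using w by (simp add: pmf_positive)
    with t0[of w] have "log b (?py w) = log b (?pxy w)" by simp
    moreover have "0 < ?pxy w" using pm_pos[OF w, of "\<lambda>w. (X w, Y w)"] by simp
    moreover have "0 < ?py w" using pm_pos[OF w] .
    ultimately show ?thesis using b by (smt (verit) log_less_cancel_iff)
  qed
  have key: "X v = X w" if v: "v \<in> set_pmf P" and w: "w \<in> set_pmf P" and yv: "Y v = Y w" for v w
  proof (rule ccontr)
    assume ne: "X v \<noteq> X w"
    have sub: "insert v {u. (X u, Y u) = (X w, Y w)} \<subseteq> {u. Y u = Y w}" using yv by auto
    have "?py w = (\<Sum>u\<in>{u. Y u = Y w}. pmf P u)" by (simp add: pmf_map_sum)
    also have "\<dots> \<ge> (\<Sum>u\<in>insert v {u. (X u, Y u) = (X w, Y w)}. pmf P u)"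
      by (rule sum_mono2[OF _ sub]) auto
    also have "(\<Sum>u\<in>insert v {u. (X u, Y u) = (X w, Y w)}. pmf P u) = pmf P v + ?pxy w"
      using ne by (simp add: pmf_map_sum)
    finally have "pmf P v + ?pxy w \<le> ?py w" .
    moreover have "pmf P v > 0" using v by (simp add: pmf_positive)
    ultimately show False using eqp[OF w] by simp
  qed
  define g where "g y = X (SOME w. w \<in> set_pmf P \<and> Y w = y)" for y
  show ?thesis
  proof (rule fdepI[where g=g])
    fix w assume w: "w \<in> set_pmf P"
    have "\<exists>u. u \<in> set_pmf P \<and> Y u = Y w" using w by blast
    then have "(SOME u. u \<in> set_pmf P \<and> Y u = Y w) \<in> set_pmf P \<and> Y (SOME u. u \<in> set_pmf P \<and> Y u = Y w) = Y w"
      by (rule someI_ex)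
    then show "X w = g (Y w)" unfolding g_def using key w by metis
  qed
qed

lemma sf_pmf: "simple_function (measure_pmf P) T" for P :: "'w::finite pmf"
  unfolding simple_function_def by auto

lemma sd_pmf: "simple_distributed (measure_pmf P) T (\<lambda>t. pmf (map_pmf T P) t)" for P :: "'w::finite pmf"
  by (rule measure_pmf.simple_distributedI[OF sf_pmf]) (auto simp: pmf_map)

lemma regroup:
  fixes P :: "'w::finite pmf"
  shows "(\<Sum>t\<in>T`UNIV. pmf (map_pmf T P) t * \<phi> t) = (\<Sum>w\<in>UNIV. pmf P w * \<phi> (T w))"
proof -
  have "(\<Sum>w\<in>UNIV. pmf P w * \<phi> (T w)) = (\<Sum>t\<in>T`UNIV. \<Sum>w\<in>{w\<in>UNIV. T w = t}. pmf P w * \<phi> (T w))"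
    by (rule sum.image_gen) simp
  also have "\<dots> = (\<Sum>t\<in>T`UNIV. pmf (map_pmf T P) t * \<phi> t)"
    by (intro sum.cong refl) (simp add: pmf_map_sum sum_distrib_right)
  finally show ?thesis by simp
qed

lemma log_split4:
  fixes a c d e p :: real
  assumes b: "1 < b" and pos: "0 < a" "0 < c" "0 < d" "0 < e"
  shows "p * log b (d / (a * (c / e))) = p * - log b a + p * - log b c - p * - log b d - p * - log b e"
proof -
  have h: "log b (d / (a * (c / e))) = log b d - log b a - log b c + log b e"
    using b pos by (simp add: log_divide log_mult)
  show ?thesis unfolding h by (simp add: algebra_simps)
qed

lemma submod:
  fixes P :: "'w::finite pmf"
  assumes b: "1 < b"
  shows "ent b P (\<lambda>w. (X w, Y w, Z w)) + ent b P Z \<le> ent b P (\<lambda>w. (X w, Z w)) + ent b P (\<lambda>w. (Y w, Z w))"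
proof -
  interpret information_space "measure_pmf P" b by standard (rule b)
  let ?d = "\<lambda>w. pmf (map_pmf (\<lambda>w. (X w, Y w, Z w)) P) (X w, Y w, Z w)"
  let ?a = "\<lambda>w. pmf (map_pmf (\<lambda>w. (X w, Z w)) P) (X w, Z w)"
  let ?c = "\<lambda>w. pmf (map_pmf (\<lambda>w. (Y w, Z w)) P) (Y w, Z w)"
  let ?e = "\<lambda>w. pmf (map_pmf Z P) (Z w)"
  note i0 = conditional_mutual_information_nonneg[OF sf_pmf sf_pmf sf_pmf, of X Y Z]
  note i1 = conditional_mutual_information_eq[OF sd_pmf sd_pmf sd_pmf sd_pmf]
  have "0 \<le> (\<Sum>(x, y, z)\<in>(\<lambda>x. (X x, Y x, Z x))`space (measure_pmf P).
        pmf (map_pmf (\<lambda>w. (X w, Y w, Z w)) P) (x, y, z) *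
        log b (pmf (map_pmf (\<lambda>w. (X w, Y w, Z w)) P) (x, y, z) /
          (pmf (map_pmf (\<lambda>w. (X w, Z w)) P) (x, z) * (pmf (map_pmf (\<lambda>w. (Y w, Z w)) P) (y, z) / pmf (map_pmf Z P) z))))"
    using i0 unfolding i1 .
  also have "\<dots> = (\<Sum>w\<in>UNIV. pmf P w * log b (?d w / (?a w * (?c w / ?e w))))"
    using regroup[of "\<lambda>w. (X w, Y w, Z w)" P "\<lambda>(x, y, z). log b (pmf (map_pmf (\<lambda>w. (X w, Y w, Z w)) P) (x, y, z) /
          (pmf (map_pmf (\<lambda>w. (X w, Z w)) P) (x, z) * (pmf (map_pmf (\<lambda>w. (Y w, Z w)) P) (y, z) / pmf (map_pmf Z P) z)))"]
    by (simp add: split_beta)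
  also have "\<dots> = (\<Sum>w\<in>UNIV. pmf P w * - log b (?a w) + pmf P w * - log b (?c w)
                   - pmf P w * - log b (?d w) - pmf P w * - log b (?e w))"
  proof (intro sum.cong refl)
    fix w
    show "pmf P w * log b (?d w / (?a w * (?c w / ?e w))) = pmf P w * - log b (?a w) + pmf P w * - log b (?c w)
                   - pmf P w * - log b (?d w) - pmf P w * - log b (?e w)"
    proof (cases "w \<in> set_pmf P")
      case True
      have "0 < ?a w" "0 < ?c w" "0 < ?d w" "0 < ?e w"
        using pm_pos[OF True, of "\<lambda>w. (X w, Z w)"] pm_pos[OF True, of "\<lambda>w. (Y w, Z w)"]
          pm_pos[OF True, of "\<lambda>w. (X w, Y w, Z w)"] pm_pos[OF True, of Z] by auto
      then show ?thesis by (rule log_split4[OF b])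
    qed (simp add: set_pmf_iff)
  qed
  also have "\<dots> = ent b P (\<lambda>w. (X w, Z w)) + ent b P (\<lambda>w. (Y w, Z w)) - ent b P (\<lambda>w. (X w, Y w, Z w)) - ent b P Z"
    unfolding ent_exp by (simp only: sum.distrib sum_subtractf)
  finally show ?thesis by simp
qed

lemma ent_le_card:
  fixes P :: "'w::finite pmf"
  assumes b: "1 < b" and S: "finite S" and XS: "\<And>w. w \<in> set_pmf P \<Longrightarrow> X w \<in> S"
  shows "ent b P X \<le> log b (card S)"
proof -
  interpret information_space "measure_pmf P" b by standard (rule b)
  note e0 = entropy_le_card_not_0[OF sd_pmf, of X]
  have "prob_space.entropy (measure_pmf P) b (count_space (X ` space (measure_pmf P))) X \<le> log b (card (X ` space (measure_pmf P) \<inter> {x. pmf (map_pmf X P) x \<noteq> 0}))"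
    using e0 by simp
  also have "X ` space (measure_pmf P) \<inter> {x. pmf (map_pmf X P) x \<noteq> 0} = X ` set_pmf P"
    by (auto simp: set_pmf_iff[symmetric])
  also have "log b (card (X ` set_pmf P)) \<le> log b (card S)"
  proof -
    obtain w where "w \<in> set_pmf P" using set_pmf_not_empty[of P] by blast
    then have "0 < card (X ` set_pmf P)" by (auto simp: card_gt_0_iff)
    moreover have "card (X ` set_pmf P) \<le> card S" by (rule card_mono[OF S]) (use XS in auto)
    ultimately show ?thesis using b by simp
  qed
  also have "prob_space.entropy (measure_pmf P) b (count_space (X ` space (measure_pmf P))) X = ent b P X"
  proof -
    have "prob_space.entropy (measure_pmf P) b (count_space (X ` space (measure_pmf P))) X = - (\<Sum>x\<in>X`space (measure_pmf P). pmf (map_pmf X P) x * log b (pmf (map_pmf X P) x))"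
      by (rule entropy_simple_distributed[OF sd_pmf])
    also have "\<dots> = - (\<Sum>x\<in>set_pmf (map_pmf X P). pmf (map_pmf X P) x * log b (pmf (map_pmf X P) x))"
      by (intro arg_cong[where f=uminus] sum.mono_neutral_right) (auto simp: pmf_eq_0_set_pmf[of "map_pmf X P", simplified])
    finally show ?thesis unfolding ent_def .
  qed
  ultimately show ?thesis by simp
qed

lemma fdepI2:
  assumes "\<And>w v. w \<in> set_pmf P \<Longrightarrow> v \<in> set_pmf P \<Longrightarrow> Y w = Y v \<Longrightarrow> X w = X v"
  shows "fdep P Y X"
proof -
  define g where "g y = X (SOME w. w \<in> set_pmf P \<and> Y w = y)" for y
  show ?thesis
  proof (rule fdepI[where g=g])
    fix w assume w: "w \<in> set_pmf P"
    have "\<exists>u. u \<in> set_pmf P \<and> Y u = Y w" using w by blast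
    then have "(SOME u. u \<in> set_pmf P \<and> Y u = Y w) \<in> set_pmf P \<and> Y (SOME u. u \<in> set_pmf P \<and> Y u = Y w) = Y w"
      by (rule someI_ex)
    then show "X w = g (Y w)" unfolding g_def using assms w by metis
  qed
qed

lemma fdepD: "fdep P Y X \<Longrightarrow> w \<in> set_pmf P \<Longrightarrow> v \<in> set_pmf P \<Longrightarrow> Y w = Y v \<Longrightarrow> X w = X v"
  unfolding fdep_def by metis

lemma ent_leI:
  fixes P :: "'w::finite pmf"
  assumes b: "1 < b" and "\<And>w v. w \<in> set_pmf P \<Longrightarrow> v \<in> set_pmf P \<Longrightarrow> Y w = Y v \<Longrightarrow> X w = X v"
  shows "ent b P X \<le> ent b P Y"
  by (rule ent_fdep_le[OF b fdepI2]) (use assms in blast)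

lemma ent_eqI:
  fixes P :: "'w::finite pmf"
  assumes b: "1 < b" and "\<And>w v. w \<in> set_pmf P \<Longrightarrow> v \<in> set_pmf P \<Longrightarrow> (X w = X v) = (Y w = Y v)"
  shows "ent b P X = ent b P Y"
  by (rule ent_fdep_eq[OF b fdepI2 fdepI2]) (use assms in blast)+

lemma ent_const:
  fixes P :: "'w::finite pmf"
  shows "ent b P (\<lambda>w. c) = 0"
  unfolding ent_def by simp

lemma subadd:
  fixes P :: "'w::finite pmf"
  assumes b: "1 < b"
  shows "ent b P (\<lambda>w. (X w, Y w)) \<le> ent b P X + ent b P Y"
proof -
  have "ent b P (\<lambda>w. (X w, Y w, ())) + ent b P (\<lambda>w. ()) \<le> ent b P (\<lambda>w. (X w, ())) + ent b P (\<lambda>w. (Y w, ()))"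
    by (rule submod[OF b])
  moreover have "ent b P (\<lambda>w. (X w, Y w, ())) = ent b P (\<lambda>w. (X w, Y w))" by (rule ent_eqI[OF b]) auto
  moreover have "ent b P (\<lambda>w. (X w, ())) = ent b P X" by (rule ent_eqI[OF b]) auto
  moreover have "ent b P (\<lambda>w. (Y w, ())) = ent b P Y" by (rule ent_eqI[OF b]) auto
  ultimately show ?thesis by (simp add: ent_const)
qed

lemma cond_mono:
  fixes P :: "'w::finite pmf"
  assumes b: "1 < b" and d: "fdep P Y Z"
  shows "cond_ent b P X Y \<le> cond_ent b P X Z"
proof -
  have "ent b P (\<lambda>w. (X w, Y w, Z w)) + ent b P Z \<le> ent b P (\<lambda>w. (X w, Z w)) + ent b P (\<lambda>w. (Y w, Z w))"
    by (rule submod[OF b])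
  moreover have "ent b P (\<lambda>w. (X w, Y w, Z w)) = ent b P (\<lambda>w. (X w, Y w))"
    apply (rule ent_eqI[OF b]) subgoal for w v using fdepD[OF d, of w v] by auto done
  moreover have "ent b P (\<lambda>w. (Y w, Z w)) = ent b P Y"
    apply (rule ent_eqI[OF b]) subgoal for w v using fdepD[OF d, of w v] by auto done
  ultimately show ?thesis unfolding cond_ent_def by simp
qed

lemma cond_ent_mono_fst:
  fixes P :: "'w::finite pmf"
  assumes b: "1 < b" and d: "\<And>w v. w \<in> set_pmf P \<Longrightarrow> v \<in> set_pmf P \<Longrightarrow> X' w = X' v \<Longrightarrow> Y w = Y v \<Longrightarrow> X w = X v"
  shows "cond_ent b P X Y \<le> cond_ent b P X' Y"
proof -
  have "ent b P (\<lambda>w. (X w, Y w)) \<le> ent b P (\<lambda>w. (X' w, Y w))"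
    apply (rule ent_leI[OF b]) subgoal for w v using d[of w v] by auto done
  then show ?thesis unfolding cond_ent_def by simp
qed

lemma cond_ent_cong:
  fixes P :: "'w::finite pmf"
  assumes b: "1 < b"
    and d1: "\<And>w v. w \<in> set_pmf P \<Longrightarrow> v \<in> set_pmf P \<Longrightarrow> (X w = X v \<and> Y w = Y v) = (X' w = X' v \<and> Y' w = Y' v)"
    and d2: "\<And>w v. w \<in> set_pmf P \<Longrightarrow> v \<in> set_pmf P \<Longrightarrow> (Y w = Y v) = (Y' w = Y' v)"
  shows "cond_ent b P X Y = cond_ent b P X' Y'"
proof -
  have "ent b P (\<lambda>w. (X w, Y w)) = ent b P (\<lambda>w. (X' w, Y' w))"
    apply (rule ent_eqI[OF b]) subgoal for w v using d1[of w v] by auto done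
  moreover have "ent b P Y = ent b P Y'" apply (rule ent_eqI[OF b]) subgoal for w v using d2[of w v] by auto done
  ultimately show ?thesis unfolding cond_ent_def by simp
qed

lemma ent_map_eq:
  assumes "map_pmf T1 P = map_pmf T2 P"
  shows "ent b P (\<lambda>w. g (T1 w)) = ent b P (\<lambda>w. g (T2 w))"
proof -
  have "map_pmf (\<lambda>w. g (T1 w)) P = map_pmf g (map_pmf T1 P)" by (simp add: map_pmf_comp)
  also have "\<dots> = map_pmf g (map_pmf T2 P)" using assms by simp
  also have "\<dots> = map_pmf (\<lambda>w. g (T2 w)) P" by (simp add: map_pmf_comp)
  finally show ?thesis unfolding ent_def by simp
qed

lemma cond_subadd_list:
  fixes P :: "'w::finite pmf"
  assumes b: "1 < b"
  shows "cond_ent b P (\<lambda>w. map (\<lambda>n. f n w) ns) Y \<le> sum_list (map (\<lambda>n. cond_ent b P (f n) Y) ns)"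
proof (induction ns)
  case Nil
  have "ent b P (\<lambda>w. (map (\<lambda>n. f n w) [], Y w)) = ent b P Y" by (rule ent_eqI[OF b]) simp
  then show ?case unfolding cond_ent_def by simp
next
  case (Cons n ns)
  let ?R = "\<lambda>w. map (\<lambda>n. f n w) ns"
  have "ent b P (\<lambda>w. (f n w, ?R w, Y w)) + ent b P Y \<le> ent b P (\<lambda>w. (f n w, Y w)) + ent b P (\<lambda>w. (?R w, Y w))"
    by (rule submod[OF b])
  moreover have "ent b P (\<lambda>w. (map (\<lambda>n. f n w) (n # ns), Y w)) = ent b P (\<lambda>w. (f n w, ?R w, Y w))"
    by (rule ent_eqI[OF b]) simp
  ultimately have "cond_ent b P (\<lambda>w. map (\<lambda>n. f n w) (n # ns)) Y \<le> cond_ent b P (f n) Y + cond_ent b P ?R Y"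
    unfolding cond_ent_def by simp
  then show ?case using Cons by simp
qed

lemma markov:
  fixes P :: "'w::finite pmf"
  assumes b: "1 < b"
    and dQ: "fdep P F Q"
    and dA: "fdep P (\<lambda>w. (Q w, U w, V w, R w)) A"
    and ind: "ent b P (\<lambda>w. (U w, V w, F w, R w)) = ent b P (\<lambda>w. (U w, V w)) + ent b P (\<lambda>w. (F w, R w))"
  shows "cond_ent b P A (\<lambda>w. (U w, F w, R w)) = cond_ent b P A (\<lambda>w. (U w, Q w, R w))"
proof -
  define Z where "Z w = (U w, Q w, R w)" for w
  note ds = fdepD[OF dQ] fdepD[OF dA]
  have e1: "ent b P (\<lambda>w. (A w, U w, F w, R w)) = ent b P (\<lambda>w. (A w, F w, Z w))"
    apply (rule ent_eqI[OF b]) subgoal for w v using ds(1)[of w v] by (auto simp: Z_def) done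
  have e2: "ent b P (\<lambda>w. (U w, F w, R w)) = ent b P (\<lambda>w. (F w, Z w))"
    apply (rule ent_eqI[OF b]) subgoal for w v using ds(1)[of w v] by (auto simp: Z_def) done
  have sm1: "ent b P (\<lambda>w. (A w, F w, Z w)) + ent b P Z \<le> ent b P (\<lambda>w. (A w, Z w)) + ent b P (\<lambda>w. (F w, Z w))"
    by (rule submod[OF b])
  have s1: "ent b P (\<lambda>w. (V w, F w, A w, Z w)) + ent b P (\<lambda>w. (A w, Z w))
      \<le> ent b P (\<lambda>w. (V w, A w, Z w)) + ent b P (\<lambda>w. (F w, A w, Z w))"
    using submod[OF b, of P V F "\<lambda>w. (A w, Z w)"] by simp
  have f1: "ent b P (\<lambda>w. (V w, A w, Z w)) = ent b P (\<lambda>w. (V w, Z w))"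
    apply (rule ent_eqI[OF b]) subgoal for w v using ds(2)[of w v] by (auto simp: Z_def) done
  have f2: "ent b P (\<lambda>w. (V w, F w, A w, Z w)) = ent b P (\<lambda>w. (U w, V w, F w, R w))"
    apply (rule ent_eqI[OF b]) subgoal for w v using ds(1)[of w v] ds(2)[of w v] by (auto simp: Z_def) done
  have f2b: "ent b P (\<lambda>w. (F w, A w, Z w)) = ent b P (\<lambda>w. (A w, F w, Z w))"
    by (rule ent_eqI[OF b]) auto
  have s2: "ent b P (\<lambda>w. (U w, F w, R w)) \<le> ent b P U + ent b P (\<lambda>w. (F w, R w))"
    using subadd[OF b, of P U "\<lambda>w. (F w, R w)"] by simp
  have s3: "ent b P (\<lambda>w. (V w, (Q w, R w), U w)) + ent b P U \<le> ent b P (\<lambda>w. (V w, U w)) + ent b P (\<lambda>w. ((Q w, R w), U w))"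
    by (rule submod[OF b])
  have r1: "ent b P (\<lambda>w. (V w, (Q w, R w), U w)) = ent b P (\<lambda>w. (V w, Z w))"
    by (rule ent_eqI[OF b]) (auto simp: Z_def)
  have r2: "ent b P (\<lambda>w. ((Q w, R w), U w)) = ent b P Z"
    by (rule ent_eqI[OF b]) (auto simp: Z_def)
  have r3: "ent b P (\<lambda>w. (V w, U w)) = ent b P (\<lambda>w. (U w, V w))"
    by (rule ent_eqI[OF b]) auto
  have "cond_ent b P A (\<lambda>w. (U w, F w, R w)) \<le> cond_ent b P A Z"
    unfolding cond_ent_def using e1 e2 sm1 by simp
  moreover have "cond_ent b P A Z \<le> cond_ent b P A (\<lambda>w. (U w, F w, R w))"
    unfolding cond_ent_def using e1 e2 s1 f1 f2 f2b s2 s3 r1 r2 r3 ind by simp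
  ultimately show ?thesis unfolding Z_def by simp
qed

lemma sum_list_bound:
  fixes f :: "'a \<Rightarrow> real"
  assumes "\<And>x. x \<in> set xs \<Longrightarrow> f x \<le> c"
  shows "sum_list (map f xs) \<le> real (length xs) * c"
  using assms
proof (induction xs)
  case Nil then show ?case by simp
next
  case (Cons a xs)
  have "f a \<le> c" using Cons.prems by simp
  moreover have "sum_list (map f xs) \<le> real (length xs) * c" using Cons by simp
  ultimately show ?case by (simp add: algebra_simps)
qed

lemma concat_inj: "map length xs = map length ys \<Longrightarrow> concat xs = concat ys \<Longrightarrow> xs = ys"
proof (induction xs arbitrary: ys)
  case Nil then show ?case by simp
next
  case (Cons x xs)
  then obtain y ys' where ys: "ys = y # ys'" by (cases ys) auto
  with Cons.prems have ly: "length x = length y" and lm: "map length xs = map length ys'" by auto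
  from Cons.prems(2) ys have "x @ concat xs = y @ concat ys'" by simp
  with ly have "x = y" "concat xs = concat ys'" by (simp_all add: append_eq_append_conv)
  with Cons.IH lm ys show ?case by simp
qed

lemma take_drop_eq: "take j a = take j b \<Longrightarrow> drop j a = drop j b \<Longrightarrow> a = b"
  by (metis append_take_drop_id)

lemma geom_step:
  fixes N :: real and L :: real
  shows "L * (\<Sum>i<Suc t. 1 / N ^ i) = L + (L * (\<Sum>i<t. 1 / N ^ i)) / N"
proof -
  have "(\<Sum>i<Suc t. 1 / N ^ i) = 1 + (\<Sum>i<t. 1 / N ^ i) / N"
    by (subst sum.lessThan_Suc_shift) (simp add: sum_divide_distrib mult.commute divide_divide_eq_left)
  then show ?thesis by (simp add: algebra_simps)
qed

theorem lemma3:
  fixes P :: "'w::finite pmf"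
    and N K L m :: nat
    and W :: "nat \<Rightarrow> 'w \<Rightarrow> 'f::{field,finite} list"
    and C :: "'c set"
    and Rs :: "'w \<Rightarrow> 'c \<Rightarrow> 'r"
    and F :: "'w \<Rightarrow> 'u"
    and Q :: "nat \<Rightarrow> 'c set \<Rightarrow> nat \<Rightarrow> 'w \<Rightarrow> 'qry"
    and A :: "nat \<Rightarrow> 'c set \<Rightarrow> nat \<Rightarrow> 'w \<Rightarrow> 'f list"
  defines "q \<equiv> real CARD('f)"
    and "Wall \<equiv> (\<lambda>w. map (\<lambda>j. W j w) [1..<K+1])"
    and "Wbar \<equiv> (\<lambda>k w. map (\<lambda>j. W j w) (filter (\<lambda>j. j \<noteq> k) [1..<K+1]))"
    and "RS \<equiv> (\<lambda>w. restrict (Rs w) C)"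
    and "RU \<equiv> (\<lambda>S w. restrict (Rs w) S)"
    and "RSmU \<equiv> (\<lambda>S w. restrict (Rs w) (C - S))"
    and "Qall \<equiv> (\<lambda>k S w. map (\<lambda>n. Q k S n w) [1..<N+1])"
    and "Aall \<equiv> (\<lambda>k S w. map (\<lambda>n. A k S n w) [1..<N+1])"
    and "Adm \<equiv> {S. S \<subseteq> C \<and> card S = m}"
    and "D \<equiv> Max {(\<Sum>n\<in>{1..N}. length (A k S n w)) | k S w.
                    k \<in> {1..K} \<and> S \<subseteq> C \<and> card S = m \<and> w \<in> set_pmf P}"
  assumes N: "N \<ge> 1" and K: "K \<ge> 2" and L: "L \<ge> 1"
    and C_fin: "finite C" and m: "m \<le> card C"
    \<comment> \<open>messages: K x L symbols, i.i.d. uniform over the field\<close>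
    and W_unif: "map_pmf Wall P =
        pmf_of_set {xs. length xs = K \<and> (\<forall>x\<in>set xs. length x = L)}"
    \<comment> \<open>the number of symbols returned by database n is fixed by its query\<close>
    and A_len: "\<And>k S n. \<exists>g. \<forall>w\<in>set_pmf P. length (A k S n w) = g (Q k S n w)"
    and C1: "\<And>k S. k \<in> {1..K} \<Longrightarrow> S \<in> Adm \<Longrightarrow>
        mut_inf q P Wall (\<lambda>w. (k, F w, RS w, RU S w)) = 0"
    and C2: "\<And>k S. k \<in> {1..K} \<Longrightarrow> S \<in> Adm \<Longrightarrow>
        mut_inf q P (Qall k S) (\<lambda>w. (Wall w, RSmU S w)) = 0"
    and C3: "\<And>k S. k \<in> {1..K} \<Longrightarrow> S \<in> Adm \<Longrightarrow>
        cond_ent q P (Qall k S) F = 0"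
    and C4: "\<And>k S n. k \<in> {1..K} \<Longrightarrow> S \<in> Adm \<Longrightarrow> n \<in> {1..N} \<Longrightarrow>
        cond_ent q P (A k S n) (\<lambda>w. (Q k S n w, Wall w, RS w)) = 0"
    and C5: "\<And>k S. k \<in> {1..K} \<Longrightarrow> S \<in> Adm \<Longrightarrow>
        cond_ent q P (W k) (\<lambda>w. (F w, Aall k S w, RU S w)) = 0"
    and C6: "\<And>k k' S n. k \<in> {1..K} \<Longrightarrow> k' \<in> {1..K} \<Longrightarrow> S \<in> Adm \<Longrightarrow> n \<in> {1..N} \<Longrightarrow>
        \<exists>S'\<in>Adm. ent q P (RU S') = ent q P (RU S) \<and>
          map_pmf (\<lambda>w. (Q k S n w, A k S n w, Wall w, RS w)) P =
          map_pmf (\<lambda>w. (Q k' S' n w, A k' S' n w, Wall w, RS w)) P"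
    and C7: "\<And>k S. k \<in> {1..K} \<Longrightarrow> S \<in> Adm \<Longrightarrow>
        mut_inf q P (Wbar k) (\<lambda>w. (F w, Aall k S w, RU S w)) = 0"
    and C8: "\<And>k S. k \<in> {1..K} \<Longrightarrow> S \<in> Adm \<Longrightarrow>
        mut_inf q P (RSmU S) (\<lambda>w. (F w, Aall k S w, W k w, RU S w)) = 0"
  shows "real D / real L \<ge> (\<Sum>i<K. 1 / real N ^ i)"
proof -
  have card2: "2 \<le> CARD('f)"
  proof -
    have "card {0::'f, 1} = 2" by simp
    moreover have "card {0::'f, 1} \<le> CARD('f)" by (rule card_mono) auto
    ultimately show ?thesis by simp
  qed
  have q1: "1 < q" unfolding q_def using card2 by simp
  have qpos: "0 < q" using q1 by simp
  define Lset where "Lset = {x::'f list. set x \<subseteq> UNIV \<and> length x = L}"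
  have Lfin: "finite Lset" unfolding Lset_def by (rule finite_lists_length_eq) simp
  have Lcard: "card Lset = CARD('f) ^ L" unfolding Lset_def by (rule card_lists_length_eq) simp
  define Sset where "Sset = {xs::'f list list. length xs = K \<and> (\<forall>x\<in>set xs. length x = L)}"
  have Sset_eq: "Sset = {xs. set xs \<subseteq> Lset \<and> length xs = K}" unfolding Sset_def Lset_def by auto
  have Sfin: "finite Sset" unfolding Sset_eq by (rule finite_lists_length_eq[OF Lfin])
  have Scard: "card Sset = (CARD('f) ^ L) ^ K" unfolding Sset_eq using card_lists_length_eq[OF Lfin] Lcard by simp
  have Sne: "Sset \<noteq> {}"
  proof -
    have "replicate K (replicate L (0::'f)) \<in> Sset" unfolding Sset_def by simp
    then show ?thesis by blast
  qed
  have logpow: "log q (real (CARD('f) ^ L) ^ j) = real j * real L" for j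
  proof -
    have "log q (q ^ (L * j)) = real (L * j)" using q1 by (simp add: log_nat_power)
    then show ?thesis unfolding q_def by (simp add: power_mult algebra_simps)
  qed
  have supp: "Wall w \<in> Sset" if "w \<in> set_pmf P" for w
  proof -
    have "Wall w \<in> set_pmf (map_pmf Wall P)" using that by simp
    then show ?thesis unfolding W_unif Sset_def[symmetric] using set_pmf_of_set[OF Sne Sfin] by simp
  qed
  have Wlen: "length (W i w) = L" if "w \<in> set_pmf P" "i \<in> {1..K}" for i w
  proof -
    have "W i w = Wall w ! (i - 1)" unfolding Wall_def using that(2) by (subst nth_map) (auto simp del: upt_Suc)
    moreover have "Wall w ! (i - 1) \<in> set (Wall w)" using that(2) by (intro nth_mem) (auto simp: Wall_def simp del: upt_Suc)
    ultimately show ?thesis using supp[OF that(1)] unfolding Sset_def by auto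
  qed
  define Wl where "Wl j w = map (\<lambda>i. W i w) [1..<j+1]" for j w
  define Wg where "Wg j w = map (\<lambda>i. W i w) [j+1..<K+1]" for j w
  have Wl_take: "Wl j w = take j (Wall w)" if "j \<le> K" for j w
    unfolding Wl_def Wall_def using that by (simp add: take_map take_upt del: upt_Suc)
  have Wg_drop: "Wg j w = drop j (Wall w)" if "j \<le> K" for j w
    unfolding Wg_def Wall_def using that by (simp add: drop_map del: upt_Suc)
  have Wl_Suc: "Wl (Suc j) w = Wl j w @ [W (Suc j) w]" for j w
    unfolding Wl_def by simp
  have HWall: "ent q P Wall = real K * real L"
  proof -
    have "ent q P Wall = - (\<Sum>x\<in>Sset. pmf (pmf_of_set Sset) x * log q (pmf (pmf_of_set Sset) x))"
      unfolding ent_def W_unif Sset_def[symmetric] using set_pmf_of_set[OF Sne Sfin] by simp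
    also have "\<dots> = log q (card Sset)"
      using Sfin Sne by (simp add: log_divide card_gt_0_iff)
    also have "\<dots> = real K * real L" using logpow[of K] Scard by simp
    finally show ?thesis .
  qed
  have HWl: "ent q P (Wl j) \<le> real j * real L" if "j \<le> K" for j
  proof -
    have "ent q P (Wl j) \<le> log q (card {xs. set xs \<subseteq> Lset \<and> length xs = j})"
    proof (rule ent_le_card[OF q1 finite_lists_length_eq[OF Lfin]])
      fix w assume w: "w \<in> set_pmf P"
      show "Wl j w \<in> {xs. set xs \<subseteq> Lset \<and> length xs = j}"
        using Wlen[OF w] that unfolding Wl_def Lset_def by auto
    qed
    also have "\<dots> = real j * real L" using card_lists_length_eq[OF Lfin] Lcard logpow by simp
    finally show ?thesis .
  qed
  have HWg: "ent q P (Wg j) \<le> real (K - j) * real L" if "j \<le> K" for j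
  proof -
    have "ent q P (Wg j) \<le> log q (card {xs. set xs \<subseteq> Lset \<and> length xs = K - j})"
    proof (rule ent_le_card[OF q1 finite_lists_length_eq[OF Lfin]])
      fix w assume w: "w \<in> set_pmf P"
      show "Wg j w \<in> {xs. set xs \<subseteq> Lset \<and> length xs = K - j}"
        using Wlen[OF w] that unfolding Wg_def Lset_def by auto
    qed
    also have "\<dots> = real (K - j) * real L" using card_lists_length_eq[OF Lfin] Lcard logpow by simp
    finally show ?thesis .
  qed
  have Wl_le: "j \<le> K \<Longrightarrow> w \<in> set_pmf P \<Longrightarrow> v \<in> set_pmf P \<Longrightarrow> Wall w = Wall v \<Longrightarrow> Wl j w = Wl j v" for j w v
    by (simp add: Wl_take)
  obtain S0 where S0C: "S0 \<subseteq> C" and S0card: "card S0 = m"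
    using obtain_subset_with_card_n[OF m] by metis
  have S0: "S0 \<in> Adm" unfolding Adm_def using S0C S0card by simp
  have "Adm \<subseteq> Pow C" unfolding Adm_def by blast
  then have Admfin: "finite Adm" using C_fin by (simp add: finite_subset)
  have AdmC: "S \<subseteq> C" if "S \<in> Adm" for S using that unfolding Adm_def by simp
  have RU_RS: "RU S w = RU S v" if "S \<subseteq> C" "RS w = RS v" for S w v
  proof -
    have "Rs w x = Rs v x" if "x \<in> S" for x
      using fun_cong[OF \<open>RS w = RS v\<close>[unfolded RS_def], of x] \<open>S \<subseteq> C\<close> that by auto
    then show ?thesis unfolding RU_def by (auto simp: restrict_def)
  qed
  have ind0: "ent q P (\<lambda>w. (Wall w, F w, RS w)) = ent q P Wall + ent q P (\<lambda>w. (F w, RS w))"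
  proof -
    have "mut_inf q P Wall (\<lambda>w. (1::nat, F w, RS w, RU S0 w)) = 0"
      using C1[of 1 S0] S0 K by simp
    moreover have "ent q P (\<lambda>w. (1::nat, F w, RS w, RU S0 w)) = ent q P (\<lambda>w. (F w, RS w))"
      apply (rule ent_eqI[OF q1]) subgoal for w v using RU_RS[OF S0C, of w v] by auto done
    moreover have "ent q P (\<lambda>w. (Wall w, (1::nat, F w, RS w, RU S0 w))) = ent q P (\<lambda>w. (Wall w, F w, RS w))"
      apply (rule ent_eqI[OF q1]) subgoal for w v using RU_RS[OF S0C, of w v] by auto done
    ultimately show ?thesis unfolding mut_inf_def by simp
  qed
  have indj: "ent q P (\<lambda>w. (Wl j w, Wg j w, F w, RS w)) = ent q P (\<lambda>w. (Wl j w, Wg j w)) + ent q P (\<lambda>w. (F w, RS w))"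
    if "j \<le> K" for j
  proof -
    have "ent q P (\<lambda>w. (Wl j w, Wg j w, F w, RS w)) = ent q P (\<lambda>w. (Wall w, F w, RS w))"
      apply (rule ent_eqI[OF q1]) subgoal for w v using that take_drop_eq[of j "Wall w" "Wall v"] by (auto simp: Wl_take Wg_drop) done
    moreover have "ent q P (\<lambda>w. (Wl j w, Wg j w)) = ent q P Wall"
      apply (rule ent_eqI[OF q1]) subgoal for w v using that take_drop_eq[of j "Wall w" "Wall v"] by (auto simp: Wl_take Wg_drop) done
    ultimately show ?thesis using ind0 by simp
  qed
  have dQall: "fdep P F (Qall k S)" if "k \<in> {1..K}" "S \<in> Adm" for k S
    by (rule cond_ent_zero_fdep[OF q1 C3[OF that]])
  have Qn_Qall: "Q k S n w = Qall k S w ! (n - 1)" if "n \<in> {1..N}" for k S n w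
    unfolding Qall_def using that by (subst nth_map) (auto simp del: upt_Suc)
  have An_Aall: "A k S n w = Aall k S w ! (n - 1)" if "n \<in> {1..N}" for k S n w
    unfolding Aall_def using that by (subst nth_map) (auto simp del: upt_Suc)
  have dQ: "fdep P F (Q k S n)" if "k \<in> {1..K}" "S \<in> Adm" "n \<in> {1..N}" for k S n
    apply (rule fdepI2) subgoal for w v using fdepD[OF dQall[OF that(1,2)], of w v] Qn_Qall[OF that(3)] by metis done
  have dA: "fdep P (\<lambda>w. (Q k S n w, Wall w, RS w)) (A k S n)" if "k \<in> {1..K}" "S \<in> Adm" "n \<in> {1..N}" for k S n
    by (rule cond_ent_zero_fdep[OF q1 C4[OF that]])
  have dAj: "fdep P (\<lambda>w. (Q k S n w, Wl j w, Wg j w, RS w)) (A k S n)"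
    if "k \<in> {1..K}" "S \<in> Adm" "n \<in> {1..N}" "j \<le> K" for k S n j
    apply (rule fdepI2) subgoal for w v using fdepD[OF dA[OF that(1-3)], of w v] that(4)
      take_drop_eq[of j "Wall w" "Wall v"] by (auto simp: Wl_take Wg_drop) done
  have dW: "fdep P (\<lambda>w. (F w, Aall k S w, RU S w)) (W k)" if "k \<in> {1..K}" "S \<in> Adm" for k S
    by (rule cond_ent_zero_fdep[OF q1 C5[OF that]])
  have mk: "cond_ent q P (A k S n) (\<lambda>w. (Wl j w, F w, RS w)) = cond_ent q P (A k S n) (\<lambda>w. (Wl j w, Q k S n w, RS w))"
    if "k \<in> {1..K}" "S \<in> Adm" "n \<in> {1..N}" "j \<le> K" for k S n j
    by (rule markov[OF q1 dQ[OF that(1-3)] dAj[OF that] indj[OF that(4)]])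
  have stepAB: "real L + cond_ent q P (Aall k S) (\<lambda>w. (Wl k w, F w, RS w))
      \<le> cond_ent q P (Aall k S) (\<lambda>w. (Wl (k - 1) w, F w, RS w))"
    if kK: "k \<in> {1..K}" and S: "S \<in> Adm" for k S
  proof -
    obtain k' where kk: "k = Suc k'" using kK by (cases k) auto
    have k'K: "k' \<le> K" using kK kk by simp
    have kK': "k \<le> K" using kK by simp
    have a1: "ent q P (\<lambda>w. (Aall k S w, Wl k w, F w, RS w)) = ent q P (\<lambda>w. (Aall k S w, Wl k' w, F w, RS w))"
      apply (rule ent_eqI[OF q1]) subgoal for w v
        using fdepD[OF dW[OF kK S], of w v] RU_RS[OF AdmC[OF S], of w v] by (auto simp: kk Wl_Suc) done
    have a2: "ent q P (\<lambda>w. (Wl k w, F w, RS w)) = ent q P (\<lambda>w. (W k w, Wl k' w, F w, RS w))"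
      apply (rule ent_eqI[OF q1]) subgoal for w v by (auto simp: kk Wl_Suc) done
    have b2': "ent q P (\<lambda>w. ((Wl k w, F w, RS w), Wg k w)) \<le> ent q P (\<lambda>w. (Wl k w, F w, RS w)) + ent q P (Wg k)"
      by (rule subadd[OF q1])
    have b2'': "ent q P (\<lambda>w. ((Wl k w, F w, RS w), Wg k w)) = ent q P (\<lambda>w. (Wall w, F w, RS w))"
      apply (rule ent_eqI[OF q1]) subgoal for w v using kK' take_drop_eq[of k "Wall w" "Wall v"] by (auto simp: Wl_take Wg_drop) done
    have b3: "ent q P (\<lambda>w. (Wl k' w, F w, RS w)) \<le> ent q P (Wl k') + ent q P (\<lambda>w. (F w, RS w))"
      using subadd[OF q1, of P "Wl k'" "\<lambda>w. (F w, RS w)"] by simp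
    have h1: "ent q P (Wl k') \<le> real k' * real L" by (rule HWl[OF k'K])
    have h2: "ent q P (Wg k) \<le> real (K - k) * real L" by (rule HWg[OF kK'])
    have h3: "real (K - k) * real L = real K * real L - real k' * real L - real L"
      using kK' kk by (simp add: of_nat_diff algebra_simps)
    have "ent q P (\<lambda>w. (W k w, Wl k' w, F w, RS w)) - ent q P (\<lambda>w. (Wl k' w, F w, RS w)) \<ge> real L"
      using a2 b2' b2'' b3 h1 h2 h3 HWall ind0 by linarith
    then show ?thesis unfolding cond_ent_def using a1 a2 kk by simp
  qed
  define gmax where "gmax k = Max ((\<lambda>S. cond_ent q P (Aall k S) (\<lambda>w. (Wl k w, F w, RS w))) ` Adm)" for k
  define fmax where "fmax k = Max ((\<lambda>S. cond_ent q P (Aall k S) (\<lambda>w. (Wl (k - 1) w, F w, RS w))) ` Adm)" for k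
  have gmax_ge: "cond_ent q P (Aall k S) (\<lambda>w. (Wl k w, F w, RS w)) \<le> gmax k" if "S \<in> Adm" for k S
    unfolding gmax_def using that Admfin by (intro Max_ge) auto
  have fmax_ge: "cond_ent q P (Aall k S) (\<lambda>w. (Wl (k - 1) w, F w, RS w)) \<le> fmax k" if "S \<in> Adm" for k S
    unfolding fmax_def using that Admfin by (intro Max_ge) auto
  have gmax_in: "\<exists>S\<in>Adm. gmax k = cond_ent q P (Aall k S) (\<lambda>w. (Wl k w, F w, RS w))" for k
  proof -
    have "gmax k \<in> (\<lambda>S. cond_ent q P (Aall k S) (\<lambda>w. (Wl k w, F w, RS w))) ` Adm"
      unfolding gmax_def using Admfin S0 by (intro Max_in) auto
    then show ?thesis by auto
  qed
  have fmax_in: "\<exists>S\<in>Adm. fmax k = cond_ent q P (Aall k S) (\<lambda>w. (Wl (k - 1) w, F w, RS w))" for k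
  proof -
    have "fmax k \<in> (\<lambda>S. cond_ent q P (Aall k S) (\<lambda>w. (Wl (k - 1) w, F w, RS w))) ` Adm"
      unfolding fmax_def using Admfin S0 by (intro Max_in) auto
    then show ?thesis by auto
  qed
  have F1: "real L + gmax k \<le> fmax k" if "k \<in> {1..K}" for k
  proof -
    obtain S where S: "S \<in> Adm" and g: "gmax k = cond_ent q P (Aall k S) (\<lambda>w. (Wl k w, F w, RS w))"
      using gmax_in by blast
    show ?thesis using stepAB[OF that S] fmax_ge[OF S, of k] g by linarith
  qed
  have stepC: "cond_ent q P (Aall (Suc k) S2) (\<lambda>w. (Wl k w, F w, RS w)) \<le> real N * gmax k"
    if k1: "1 \<le> k" and kK: "k < K" and S2: "S2 \<in> Adm" for k S2
  proof -
    let ?Y = "\<lambda>w. (Wl k w, F w, RS w)"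
    have kA: "k \<in> {1..K}" and kA': "Suc k \<in> {1..K}" and kle: "k \<le> K" using k1 kK by auto
    have AallF: "Aall (Suc k) S2 = (\<lambda>w. map (\<lambda>n. A (Suc k) S2 n w) [1..<N+1])" unfolding Aall_def by simp
    have c1: "cond_ent q P (Aall (Suc k) S2) ?Y \<le> sum_list (map (\<lambda>n. cond_ent q P (A (Suc k) S2 n) ?Y) [1..<N+1])"
      unfolding AallF by (rule cond_subadd_list[OF q1])
    have WlF: "Wl k = (\<lambda>w. take k (Wall w))" by (rule ext) (simp add: Wl_take[OF kle])
    have c2: "cond_ent q P (A (Suc k) S2 n) ?Y \<le> gmax k" if n: "n \<in> set [1..<N+1]" for n
    proof -
      have nN: "n \<in> {1..N}" using n by auto
      obtain S' where S': "S' \<in> Adm" and ME: "map_pmf (\<lambda>w. (Q (Suc k) S2 n w, A (Suc k) S2 n w, Wall w, RS w)) P =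
          map_pmf (\<lambda>w. (Q k S' n w, A k S' n w, Wall w, RS w)) P"
        using C6[OF kA' kA S2 nN] by blast
      have e1: "cond_ent q P (A (Suc k) S2 n) ?Y = cond_ent q P (A (Suc k) S2 n) (\<lambda>w. (Wl k w, Q (Suc k) S2 n w, RS w))"
        by (rule mk[OF kA' S2 nN kle])
      have e2: "cond_ent q P (A (Suc k) S2 n) (\<lambda>w. (Wl k w, Q (Suc k) S2 n w, RS w))
          = cond_ent q P (A k S' n) (\<lambda>w. (Wl k w, Q k S' n w, RS w))"
        unfolding cond_ent_def WlF
        using ent_map_eq[OF ME, of q "\<lambda>(qq, a, wa, r). (a, take k wa, qq, r)"]
          ent_map_eq[OF ME, of q "\<lambda>(qq, a, wa, r). (take k wa, qq, r)"] by simp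
      have e3: "cond_ent q P (A k S' n) ?Y = cond_ent q P (A k S' n) (\<lambda>w. (Wl k w, Q k S' n w, RS w))"
        by (rule mk[OF kA S' nN kle])
      have e4: "cond_ent q P (A k S' n) ?Y \<le> cond_ent q P (Aall k S') ?Y"
        apply (rule cond_ent_mono_fst[OF q1]) subgoal for w v using An_Aall[OF nN] by metis done
      show ?thesis using e1 e2 e3 e4 gmax_ge[OF S', of k] by linarith
    qed
    have "sum_list (map (\<lambda>n. cond_ent q P (A (Suc k) S2 n) ?Y) [1..<N+1]) \<le> real (length [1..<N+1]) * gmax k"
      by (rule sum_list_bound) (rule c2)
    then show ?thesis using c1 by (simp del: upt_Suc)
  qed
  have F2: "fmax (Suc k) / real N \<le> gmax k" if "1 \<le> k" "k < K" for k
  proof -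
    obtain S where S: "S \<in> Adm" and f: "fmax (Suc k) = cond_ent q P (Aall (Suc k) S) (\<lambda>w. (Wl (Suc k - 1) w, F w, RS w))"
      using fmax_in by blast
    have "fmax (Suc k) \<le> real N * gmax k" using stepC[OF that S] f by simp
    moreover have "0 < real N" using N by simp
    ultimately show ?thesis by (simp add: divide_le_eq mult.commute)
  qed
  have F3: "0 \<le> gmax K"
    using gmax_ge[OF S0, of K] cond_ent_nonneg[OF q1, of P "Aall K S0" "\<lambda>w. (Wl K w, F w, RS w)"] by linarith
  have Dset_fin: "finite {(\<Sum>n\<in>{1..N}. length (A k S n w)) | k S w.
                    k \<in> {1..K} \<and> S \<subseteq> C \<and> card S = m \<and> w \<in> set_pmf P}"
  proof (rule finite_subset)
    show "{(\<Sum>n\<in>{1..N}. length (A k S n w)) | k S w.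
                    k \<in> {1..K} \<and> S \<subseteq> C \<and> card S = m \<and> w \<in> set_pmf P}
       \<subseteq> (\<lambda>(k, S, w). \<Sum>n\<in>{1..N}. length (A k S n w)) ` ({1..K} \<times> Pow C \<times> UNIV)"
      by (auto simp: image_iff) (metis Pow_iff atLeastAtMost_iff)
    show "finite ((\<lambda>(k, S, w). \<Sum>n\<in>{1..N}. length (A k S n w)) ` ({1..K} \<times> Pow C \<times> (UNIV :: 'w set)))"
      using C_fin by simp
  qed
  have Dbound: "(\<Sum>n\<in>{1..N}. length (A k S n w)) \<le> D"
    if "k \<in> {1..K}" "S \<in> Adm" "w \<in> set_pmf P" for k S w
    unfolding D_def using that AdmC[OF that(2)] Dset_fin unfolding Adm_def by (intro Max_ge) auto
  have stepD: "cond_ent q P (Aall 1 S) (\<lambda>w. (Wl 0 w, F w, RS w)) \<le> real D" if S: "S \<in> Adm" for S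
  proof -
    have k1: "(1::nat) \<in> {1..K}" using K by simp
    have "\<forall>n. \<exists>g. \<forall>w\<in>set_pmf P. length (A 1 S n w) = g (Q 1 S n w)" using A_len by blast
    then have "\<exists>G. \<forall>n. \<forall>w\<in>set_pmf P. length (A 1 S n w) = G n (Q 1 S n w)" by (rule choice)
    then obtain G where G: "\<And>n w. w \<in> set_pmf P \<Longrightarrow> length (A 1 S n w) = G n (Q 1 S n w)" by blast
    define pad where "pad w = take D (concat (Aall 1 S w) @ replicate D (0::'f))" for w
    have lenc: "length (concat (Aall 1 S w)) = (\<Sum>n\<in>{1..N}. length (A 1 S n w))" for w
    proof -
      have "length (concat (Aall 1 S w)) = sum_list (map (\<lambda>n. length (A 1 S n w)) [1..<N+1])"
        unfolding Aall_def by (simp add: length_concat comp_def del: upt_Suc)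
      also have "\<dots> = sum (\<lambda>n. length (A 1 S n w)) (set [1..<N+1])"
        by (rule sum_list_distinct_conv_sum_set) simp
      also have "set [1..<N+1] = {1..N}" by auto
      finally show ?thesis .
    qed
    have d1: "cond_ent q P (Aall 1 S) (\<lambda>w. (Wl 0 w, F w, RS w)) \<le> cond_ent q P (Aall 1 S) (Qall 1 S)"
      apply (rule cond_mono[OF q1]) apply (rule fdepI2) subgoal for w v using fdepD[OF dQall[OF k1 S], of w v] by auto done
    have d2: "ent q P (\<lambda>w. (Aall 1 S w, Qall 1 S w)) \<le> ent q P (\<lambda>w. (pad w, Qall 1 S w))"
    proof (rule ent_leI[OF q1])
      fix w v assume w: "w \<in> set_pmf P" and v: "v \<in> set_pmf P" and eq: "(pad w, Qall 1 S w) = (pad v, Qall 1 S v)"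
      have Qeq: "Q 1 S n w = Q 1 S n v" if "n \<in> {1..N}" for n using eq Qn_Qall[OF that] by simp
      have ml: "map length (Aall 1 S w) = map length (Aall 1 S v)"
        unfolding Aall_def using G[OF w] G[OF v] Qeq by (auto simp del: upt_Suc)
      have lw: "length (concat (Aall 1 S w)) \<le> D" using lenc Dbound[OF k1 S w] by simp
      have lv: "length (concat (Aall 1 S v)) \<le> D" using lenc Dbound[OF k1 S v] by simp
      have leq: "length (concat (Aall 1 S w)) = length (concat (Aall 1 S v))"
        using ml by (simp add: length_concat)
      have cw: "concat (Aall 1 S w) = take (length (concat (Aall 1 S w))) (pad w)"
        unfolding pad_def using lw by (simp add: min_def)
      have cv: "concat (Aall 1 S v) = take (length (concat (Aall 1 S v))) (pad v)"
        unfolding pad_def using lv by (simp add: min_def)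
      have "concat (Aall 1 S w) = concat (Aall 1 S v)" using cw cv leq eq by simp
      then have "Aall 1 S w = Aall 1 S v" using concat_inj[OF ml] by simp
      then show "(Aall 1 S w, Qall 1 S w) = (Aall 1 S v, Qall 1 S v)" using eq by simp
    qed
    have d3: "ent q P (\<lambda>w. (pad w, Qall 1 S w)) \<le> ent q P pad + ent q P (Qall 1 S)"
      by (rule subadd[OF q1])
    have d4: "ent q P pad \<le> log q (card {xs. set xs \<subseteq> (UNIV::'f set) \<and> length xs = D})"
      by (rule ent_le_card[OF q1 finite_lists_length_eq]) (auto simp: pad_def)
    have d5: "log q (card {xs. set xs \<subseteq> (UNIV::'f set) \<and> length xs = D}) = real D"
      using card_lists_length_eq[of "UNIV::'f set" D] q1 by (simp add: q_def[symmetric] log_nat_power)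
    show ?thesis using d1 d2 d3 d4 d5 unfolding cond_ent_def by linarith
  qed
  have F4: "fmax 1 \<le> real D"
  proof -
    obtain S where S: "S \<in> Adm" and f: "fmax 1 = cond_ent q P (Aall 1 S) (\<lambda>w. (Wl (1 - 1) w, F w, RS w))"
      using fmax_in by blast
    show ?thesis using stepD[OF S] f by simp
  qed
  have Npos: "0 < real N" using N by simp
  have ind: "real L * (\<Sum>i<Suc t. 1 / real N ^ i) \<le> fmax (K - t)" if "t < K" for t
    using that
  proof (induction t)
    case 0
    have "real L + gmax K \<le> fmax K" using F1[of K] K by simp
    then show ?case using F3 by simp
  next
    case (Suc t)
    define k where "k = K - Suc t"
    have k1: "1 \<le> k" and kK: "k < K" and kS: "Suc k = K - t" using Suc.prems by (auto simp: k_def)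
    have IH: "real L * (\<Sum>i<Suc t. 1 / real N ^ i) \<le> fmax (Suc k)" using Suc.IH Suc.prems kS by simp
    have "real L * (\<Sum>i<Suc t. 1 / real N ^ i) / real N \<le> fmax (Suc k) / real N"
      using divide_right_mono[OF IH, of "real N"] Npos by simp
    also have "\<dots> \<le> gmax k" by (rule F2[OF k1 kK])
    finally have "real L + real L * (\<Sum>i<Suc t. 1 / real N ^ i) / real N \<le> fmax k"
      using F1[of k] k1 kK by simp
    then show ?case unfolding geom_step[where L="real L" and N="real N" and t="Suc t"] k_def by simp
  qed
  have "real L * (\<Sum>i<K. 1 / real N ^ i) \<le> fmax 1"
    using ind[of "K - 1"] K by simp
  then have "real L * (\<Sum>i<K. 1 / real N ^ i) \<le> real D" using F4 by linarith
  moreover have "0 < real L" using L by simp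
  ultimately show ?thesis by (simp add: pos_le_divide_eq mult.commute)
qed

end
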